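(* Over all integers $m\ge2$, $k\ge1$ and real $\alpha\in(1,m^{1/k})$, the quantity $\max\{V_J(m,k,\alpha),V_H(m,k,\alpha)\}$ is minimized at $m=2$, $k=1$, $\alpha=\frac32$, where its value is $\frac{5}{6\ln2}$; that is, $\max\{V_J(m,k,\alpha),V_H(m,k,\alpha)\}\ge\frac{5}{6\ln2}$ for every such $(m,k,\alpha)$, with equality at $(2,1,\frac32)$.
   Context: $V_J(m,k,\alpha)=\frac{k}{\ln m}\left(\left(1-\frac{\alpha}{m^{1/k}}\right)\Sigma^{\alpha,\mathrm{prim}}_{m,k}+\left(1-\frac1\alpha\right)\Sigma^{\alpha,\mathrm{sec}}_{m,k}\right)$ and $V_H(m,k,\alpha)=\frac{k}{\ln m}\left(\alpha+\frac{m^{1/k}}{\alpha}-2\right)$. Here $\mathcal{S}^{\alpha,\mathrm{prim}}_{m,k}=\{m^{(\kappa-1)/k}\}_{\kappa\in[k]}\cup\{\alpha m^{(\kappa-1)/k}\}_{\kappa\in[k]}$, $\mathcal{S}^{\alpha,\mathrm{sec}}_{m,k}=\{m^{(\kappa-1)/k}\}_{\kappa\in[k]}\cup\{\frac1\alpha m^{\kappa/k}\}_{\kappa\in[k]}$, $\Sigma^{\alpha,\mathrm{prim}}_{m,k}=\sum_{\emptyset\ne\mathcal{N}\subseteq\mathcal{S}^{\alpha,\mathrm{prim}}_{m,k}}\frac{(-1)^{|\mathcal{N}|+1}}{\mathrm{LCM}(\mathcal{N})}$, $\Sigma^{\alpha,\mathrm{sec}}_{m,k}=\sum_{\emptyset\ne\mathcal{N}\subseteq\mathcal{S}^{\alpha,\mathrm{sec}}_{m,k}}\frac{(-1)^{|\mathcal{N}|+1}}{\mathrm{LCM}(\mathcal{N})}$.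 For a finite $\mathcal{N}\subseteq\mathbb{R}_{>0}$, $\mathrm{LCM}(\mathcal{N})$ is the smallest positive real that is an integer multiple of every element of $\mathcal{N}$, or $\infty$ if none exists; $1/\infty=0$. *)

theory Defs
  imports Complex_Main
begin

definition common_multiples :: "real set \<Rightarrow> real set" where
  "common_multiples N = {L. L > 0 \<and> (\<forall>x\<in>N. \<exists>j::int. L = of_int j * x)}"

text \<open>1 / LCM(N), where LCM(N) is the smallest common positive multiple,
  and 1/\<infinity> = 0 if there is none.\<close>
definition inv_LCM :: "real set \<Rightarrow> real" where
  "inv_LCM N = (if common_multiples N = {} then 0
                else 1 / (LEAST L. L \<in> common_multiples N))"

definition S_prim :: "nat \<Rightarrow> nat \<Rightarrow> real \<Rightarrow> real set" where
  "S_prim m k \<alpha> = (\<lambda>\<kappa>. real m powr ((real \<kappa> - 1) / real k)) ` {1..k}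
                 \<union> (\<lambda>\<kappa>. \<alpha> * real m powr ((real \<kappa> - 1) / real k)) ` {1..k}"

definition S_sec :: "nat \<Rightarrow> nat \<Rightarrow> real \<Rightarrow> real set" where
  "S_sec m k \<alpha> = (\<lambda>\<kappa>. real m powr ((real \<kappa> - 1) / real k)) ` {1..k}
                 \<union> (\<lambda>\<kappa>. (1 / \<alpha>) * real m powr (real \<kappa> / real k)) ` {1..k}"

definition incl_excl_sum :: "real set \<Rightarrow> real" where
  "incl_excl_sum S = (\<Sum>N \<in> Pow S - {{}}. (-1) ^ (card N + 1) * inv_LCM N)"

definition Sigma_prim :: "nat \<Rightarrow> nat \<Rightarrow> real \<Rightarrow> real" where
  "Sigma_prim m k \<alpha> = incl_excl_sum (S_prim m k \<alpha>)"

definition Sigma_sec :: "nat \<Rightarrow> nat \<Rightarrow> real \<Rightarrow> real" where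
  "Sigma_sec m k \<alpha> = incl_excl_sum (S_sec m k \<alpha>)"

definition V_J :: "nat \<Rightarrow> nat \<Rightarrow> real \<Rightarrow> real" where
  "V_J m k \<alpha> = real k / ln (real m) *
     ((1 - \<alpha> / real m powr (1 / real k)) * Sigma_prim m k \<alpha>
      + (1 - 1 / \<alpha>) * Sigma_sec m k \<alpha>)"

definition V_H :: "nat \<Rightarrow> nat \<Rightarrow> real \<Rightarrow> real" where
  "V_H m k \<alpha> = real k / ln (real m) * (\<alpha> + real m powr (1 / real k) / \<alpha> - 2)"

end

theory Submission
  imports Defs
begin


lemma cm_mult_closed:
  assumes "L \<in> common_multiples N" "(n::int) \<ge> 1"
  shows "of_int n * L \<in> common_multiples N"
proof -
  have "L > 0" using assms unfolding common_multiples_def by auto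
  moreover have "\<forall>x\<in>N. \<exists>j::int. of_int n * L = of_int j * x"
  proof
    fix x assume "x \<in> N"
    then obtain j :: int where "L = of_int j * x" using assms unfolding common_multiples_def by auto
    then show "\<exists>j::int. of_int n * L = of_int j * x" by (intro exI[of _ "n*j"]) simp
  qed
  ultimately show ?thesis using assms unfolding common_multiples_def by auto
qed

lemma cm_least:
  assumes fin: "finite N" and ne: "N \<noteq> {}" and pos: "\<forall>x\<in>N. x > 0"
    and cm: "common_multiples N \<noteq> {}"
  shows "(LEAST L. L \<in> common_multiples N) \<in> common_multiples N"
    and "\<forall>y\<in>common_multiples N. (LEAST L. L \<in> common_multiples N) \<le> y"
    and "\<forall>y\<in>common_multiples N. \<exists>n::int. n \<ge> 1 \<and> y = of_int n * (LEAST L. L \<in> common_multiples N)"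
proof -
  obtain x0 where x0: "x0 \<in> N" using ne by auto
  obtain y0 where y0: "y0 \<in> common_multiples N" using cm by auto
  define F where "F = {y \<in> common_multiples N. y \<le> y0}"
  have "F \<subseteq> (\<lambda>j. of_int j * x0) ` {0..\<lceil>y0/x0\<rceil>}"
  proof
    fix y assume "y \<in> F"
    then have y: "y > 0" "y \<le> y0" "\<exists>j::int. y = of_int j * x0"
      using x0 unfolding F_def common_multiples_def by auto
    then obtain j :: int where j: "y = of_int j * x0" by auto
    have x0p: "x0 > 0" using pos x0 by auto
    have "of_int j = y / x0" using j x0p by simp
    then have "of_int j \<le> y0 / x0" "0 < (of_int j::real)" using y x0p by (auto simp: divide_right_mono)
    then have "j \<le> \<lceil>y0/x0\<rceil>" "0 \<le> j" by linarith+
    then show "y \<in> (\<lambda>j. of_int j * x0) ` {0..\<lceil>y0/x0\<rceil>}" using j by auto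
  qed
  then have finF: "finite F" by (rule finite_subset) simp
  have "y0 \<in> F" using y0 unfolding F_def by simp
  then have neF: "F \<noteq> {}" by auto
  define L where "L = Min F"
  have LF: "L \<in> F" unfolding L_def using finF neF by simp
  have Lle: "\<forall>y\<in>common_multiples N. L \<le> y"
  proof
    fix y assume y: "y \<in> common_multiples N"
    show "L \<le> y"
    proof (cases "y \<le> y0")
      case True then have "y \<in> F" using y unfolding F_def by simp
      then show ?thesis unfolding L_def using finF by simp
    next
      case False then show ?thesis using LF unfolding F_def by auto
    qed
  qed
  have LCM: "L \<in> common_multiples N" using LF unfolding F_def by simp
  have Leq: "(LEAST L. L \<in> common_multiples N) = L"
    by (rule Least_equality) (use LCM Lle in auto)
  show "(LEAST L. L \<in> common_multiples N) \<in> common_multiples N" using Leq LCM by simp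
  show "\<forall>y\<in>common_multiples N. (LEAST L. L \<in> common_multiples N) \<le> y" using Leq Lle by simp
  have Lp: "L > 0" using LCM unfolding common_multiples_def by auto
  show "\<forall>y\<in>common_multiples N. \<exists>n::int. n \<ge> 1 \<and> y = of_int n * (LEAST L. L \<in> common_multiples N)"
  proof
    fix y assume y: "y \<in> common_multiples N"
    define n where "n = \<lfloor>y / L\<rfloor>"
    define r where "r = y - of_int n * L"
    have nle: "of_int n \<le> y / L" "y / L < of_int n + 1" unfolding n_def by linarith+
    have r0: "r \<ge> 0" using nle(1) Lp unfolding r_def by (simp add: field_simps)
    have rL: "r < L" using nle(2) Lp unfolding r_def by (simp add: field_simps)
    have r_mult: "\<forall>x\<in>N. \<exists>j::int. r = of_int j * x"
    proof
      fix x assume x: "x \<in> N"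
      obtain i :: int where i: "y = of_int i * x" using y x unfolding common_multiples_def by auto
      obtain j :: int where j: "L = of_int j * x" using LCM x unfolding common_multiples_def by auto
      show "\<exists>j::int. r = of_int j * x"
        by (intro exI[of _ "i - n*j"]) (simp add: r_def i j algebra_simps)
    qed
    have "r = 0"
    proof (rule ccontr)
      assume "r \<noteq> 0"
      then have "r \<in> common_multiples N" using r0 r_mult unfolding common_multiples_def by auto
      then show False using Lle rL by force
    qed
    then have yn: "y = of_int n * L" unfolding r_def by simp
    have "y > 0" using y unfolding common_multiples_def by auto
    then have "n \<ge> 1" using yn Lp by (smt (verit, best) mult_nonpos_nonneg of_int_le_0_iff)
    then show "\<exists>n::int. n \<ge> 1 \<and> y = of_int n * (LEAST L. L \<in> common_multiples N)"
      using yn Leq by auto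
  qed
qed

definition mul :: "real \<Rightarrow> real \<Rightarrow> real set" where
  "mul T x = {y. 0 < y \<and> y \<le> T \<and> (\<exists>j::int. y = of_int j * x)}"

lemma finite_mul: assumes "x > 0" shows "finite (mul T x)"
proof -
  have "mul T x \<subseteq> (\<lambda>j. of_int j * x) ` {0..\<lceil>T/x\<rceil>}"
  proof
    fix y assume "y \<in> mul T x"
    then have y: "y > 0" "y \<le> T" and "\<exists>j::int. y = of_int j * x" unfolding mul_def by auto
    then obtain j :: int where j: "y = of_int j * x" by auto
    have "of_int j = y / x" using j assms by simp
    then have "of_int j \<le> T / x" "0 < (of_int j::real)" using y assms by (auto simp: divide_right_mono)
    then have "j \<le> \<lceil>T/x\<rceil>" "0 \<le> j" by linarith+
    then show "y \<in> (\<lambda>j. of_int j * x) ` {0..\<lceil>T/x\<rceil>}" using j by auto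
  qed
  then show ?thesis by (rule finite_subset) simp
qed

lemma inter_mul_eq:
  assumes "B \<noteq> {}"
  shows "\<Inter> (mul T ` B) = {y \<in> common_multiples B. y \<le> T}"
  using assms unfolding mul_def common_multiples_def by auto

lemma count_inter:
  assumes fin: "finite B" and ne: "B \<noteq> {}" and pos: "\<forall>x\<in>B. x > 0" and T: "T > 0"
  shows "\<bar>real (card (\<Inter> (mul T ` B))) - T * inv_LCM B\<bar> \<le> 1"
proof (cases "common_multiples B = {}")
  case True
  then show ?thesis using inter_mul_eq[OF ne] unfolding inv_LCM_def by simp
next
  case False
  define L where "L = (LEAST L. L \<in> common_multiples B)"
  have LCM: "L \<in> common_multiples B"
    and all: "\<forall>y\<in>common_multiples B. \<exists>n::int. n \<ge> 1 \<and> y = of_int n * L"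
    using cm_least[OF fin ne pos False] unfolding L_def by auto
  have Lp: "L > 0" using LCM unfolding common_multiples_def by auto
  have eq: "{y \<in> common_multiples B. y \<le> T} = (\<lambda>n. of_int n * L) ` {1..\<lfloor>T/L\<rfloor>}"
  proof
    show "{y \<in> common_multiples B. y \<le> T} \<subseteq> (\<lambda>n. of_int n * L) ` {1..\<lfloor>T/L\<rfloor>}"
    proof
      fix y assume y: "y \<in> {y \<in> common_multiples B. y \<le> T}"
      then obtain n :: int where n: "n \<ge> 1" "y = of_int n * L" using all by auto
      have "of_int n \<le> T / L" using n y Lp by (simp add: field_simps)
      then have "n \<le> \<lfloor>T/L\<rfloor>" by linarith
      then show "y \<in> (\<lambda>n. of_int n * L) ` {1..\<lfloor>T/L\<rfloor>}" using n by auto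
    qed
    show "(\<lambda>n. of_int n * L) ` {1..\<lfloor>T/L\<rfloor>} \<subseteq> {y \<in> common_multiples B. y \<le> T}"
    proof
      fix y assume "y \<in> (\<lambda>n. of_int n * L) ` {1..\<lfloor>T/L\<rfloor>}"
      then obtain n :: int where n: "1 \<le> n" "n \<le> \<lfloor>T/L\<rfloor>" "y = of_int n * L" by auto
      have "of_int n \<le> T / L" using n(2) by linarith
      then have "y \<le> T" using n(3) Lp by (simp add: field_simps)
      moreover have "y \<in> common_multiples B" using cm_mult_closed[OF LCM n(1)] n(3) by simp
      ultimately show "y \<in> {y \<in> common_multiples B. y \<le> T}" by simp
    qed
  qed
  have inj: "inj_on (\<lambda>n. of_int n * L) {1..\<lfloor>T/L\<rfloor>}"
    using Lp by (auto simp: inj_on_def)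
  have "card (\<Inter> (mul T ` B)) = nat \<lfloor>T/L\<rfloor>"
    using inter_mul_eq[OF ne] eq card_image[OF inj] by simp
  moreover have "inv_LCM B = 1 / L" unfolding inv_LCM_def L_def using False by simp
  moreover have "T/L - 1 < of_int \<lfloor>T/L\<rfloor>" "of_int \<lfloor>T/L\<rfloor> \<le> T/L" by linarith+
  moreover have "\<lfloor>T/L\<rfloor> \<ge> 0" using T Lp by simp
  ultimately have "real (card (\<Inter> (mul T ` B))) = of_int \<lfloor>T/L\<rfloor>" "T * inv_LCM B = T / L"
    "T/L - 1 < of_int \<lfloor>T/L\<rfloor>" "of_int \<lfloor>T/L\<rfloor> \<le> T/L" by auto
  then show ?thesis unfolding abs_le_iff by linarith
qed

lemma count_union:
  assumes fin: "finite S" and pos: "\<forall>x\<in>S. x > 0" and T: "T > 0"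
  shows "\<bar>real (card (\<Union> (mul T ` S))) - T * incl_excl_sum S\<bar> \<le> real (card (Pow S))"
proof -
  interpret Incl_Excl finite "\<lambda>A. real (card A)"
    by unfold_locales (auto simp: card_Un_disjnt)
  have fm: "\<And>x. x \<in> S \<Longrightarrow> finite (mul T x)" using pos finite_mul by auto
  have IE: "real (card (\<Union> (mul T ` S))) =
     (\<Sum>B | B \<subseteq> S \<and> B \<noteq> {}. (- 1) ^ (card B + 1) * real (card (\<Inter> (mul T ` B))))"
    using restricted_indexed[OF fin, of "mul T"] fm by simp
  have setq: "{B. B \<subseteq> S \<and> B \<noteq> {}} = Pow S - {{}}" by auto
  have "real (card (\<Union> (mul T ` S))) - T * incl_excl_sum S =
     (\<Sum>B \<in> Pow S - {{}}. (- 1) ^ (card B + 1) * (real (card (\<Inter> (mul T ` B))) - T * inv_LCM B))"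
  proof -
    let ?P = "Pow S - {{}}"
    have "(\<Sum>B \<in> ?P. (- 1) ^ (card B + 1) * (real (card (\<Inter> (mul T ` B))) - T * inv_LCM B))
       = (\<Sum>B \<in> ?P. (- 1) ^ (card B + 1) * real (card (\<Inter> (mul T ` B)))) - (\<Sum>B \<in> ?P. T * ((- 1) ^ (card B + 1) * inv_LCM B))"
      by (simp only: sum_subtractf[symmetric] right_diff_distrib mult.left_commute)
    also have "\<dots> = (\<Sum>B \<in> ?P. (- 1) ^ (card B + 1) * real (card (\<Inter> (mul T ` B)))) - T * (\<Sum>B \<in> ?P. (- 1) ^ (card B + 1) * inv_LCM B)"
      by (simp only: sum_distrib_left)
    finally show ?thesis unfolding IE setq incl_excl_sum_def by simp
  qed
  also have "\<bar>\<dots>\<bar> \<le> (\<Sum>B \<in> Pow S - {{}}. \<bar>(- 1) ^ (card B + 1) * (real (card (\<Inter> (mul T ` B))) - T * inv_LCM B)\<bar>)"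
    by (rule sum_abs)
  also have "\<dots> \<le> (\<Sum>B \<in> Pow S - {{}}. 1)"
  proof (rule sum_mono)
    fix B assume B: "B \<in> Pow S - {{}}"
    have "finite B" using B fin finite_subset by auto
    then have "\<bar>real (card (\<Inter> (mul T ` B))) - T * inv_LCM B\<bar> \<le> 1"
      using count_inter[of B T] B pos T by auto
    then show "\<bar>(- 1) ^ (card B + 1) * (real (card (\<Inter> (mul T ` B))) - T * inv_LCM B)\<bar> \<le> 1"
      by (simp add: abs_mult)
  qed
  also have "\<dots> \<le> real (card (Pow S))"
    using fin by (simp add: card_Diff_subset)
  finally show ?thesis .
qed

lemma incl_excl_mono:
  assumes fin: "finite S" and pos: "\<forall>x\<in>S. x > 0" and sub: "S' \<subseteq> S"
  shows "incl_excl_sum S' \<le> incl_excl_sum S"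
proof (rule ccontr)
  assume "\<not> ?thesis"
  then have d: "incl_excl_sum S' - incl_excl_sum S > 0" by simp
  have fin': "finite S'" using fin sub finite_subset by auto
  have pos': "\<forall>x\<in>S'. x > 0" using pos sub by auto
  define K where "K = real (card (Pow S)) + real (card (Pow S'))"
  define T where "T = (K + 1) / (incl_excl_sum S' - incl_excl_sum S)"
  have Kp: "K \<ge> 0" unfolding K_def by simp
  have Tp: "T > 0" unfolding T_def using d Kp by simp
  have c1: "\<bar>real (card (\<Union> (mul T ` S))) - T * incl_excl_sum S\<bar> \<le> real (card (Pow S))"
    by (rule count_union[OF fin pos Tp])
  have c2: "\<bar>real (card (\<Union> (mul T ` S'))) - T * incl_excl_sum S'\<bar> \<le> real (card (Pow S'))"
    by (rule count_union[OF fin' pos' Tp])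
  have "finite (\<Union> (mul T ` S))" using fin pos finite_mul by auto
  then have "card (\<Union> (mul T ` S')) \<le> card (\<Union> (mul T ` S))"
    by (rule card_mono) (use sub in auto)
  then have "T * (incl_excl_sum S' - incl_excl_sum S) \<le> K"
    using c1 c2 unfolding K_def by (simp add: abs_le_iff algebra_simps)
  moreover have "T * (incl_excl_sum S' - incl_excl_sum S) = K + 1"
    unfolding T_def using d by simp
  ultimately show False by simp
qed

lemma inv_LCM_single: assumes "x > 0" shows "inv_LCM {x} = 1 / x"
proof -
  have xin: "x \<in> common_multiples {x}" using assms unfolding common_multiples_def
    by (auto intro: exI[of _ 1])
  have "(LEAST L. L \<in> common_multiples {x}) = x"
  proof (rule Least_equality)
    show "x \<in> common_multiples {x}" by (rule xin)
    fix y assume "y \<in> common_multiples {x}"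
    then obtain j :: int where y: "y > 0" "y = of_int j * x" unfolding common_multiples_def by auto
    then have "of_int j > (0::real)" using assms by (simp add: zero_less_mult_iff)
    then have "j \<ge> 1" by simp
    then have "of_int j \<ge> (1::real)" by simp
    then show "x \<le> y" using y assms by (simp add: mult_le_cancel_right1 less_imp_le)
  qed
  then show ?thesis unfolding inv_LCM_def using xin by auto
qed

lemma incl_excl_pair:
  assumes "a > 0" "a \<noteq> 1"
  shows "incl_excl_sum {1, a} = 1 + 1/a - inv_LCM {1, a}"
proof -
  have P: "Pow {1, a} - {{}} = {{1}, {a}, {1, a}}" by auto
  have d: "{1::real} \<noteq> {a}" "{1::real} \<noteq> {1, a}" "{a} \<noteq> {1::real, a}" using assms by auto
  show ?thesis unfolding incl_excl_sum_def P
    using d assms by (simp add: inv_LCM_single)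
qed

lemma eps_cases:
  assumes a: "a > 1"
  shows "inv_LCM {1, a} = 0 \<or> (\<exists>j i :: int. j \<ge> 1 \<and> of_int j * a = of_int i \<and> inv_LCM {1, a} = 1 / (of_int j * a))"
proof (cases "common_multiples {1, a} = {}")
  case True then show ?thesis unfolding inv_LCM_def by simp
next
  case False
  define L where "L = (LEAST L. L \<in> common_multiples {1, a})"
  have "L \<in> common_multiples {1, a}" using cm_least(1)[OF _ _ _ False] a unfolding L_def by auto
  then obtain i j :: int where L: "L > 0" "L = of_int i * 1" "L = of_int j * a"
    unfolding common_multiples_def by blast
  have "of_int j > (0::real)" using L a by (smt (verit) mult_nonpos_nonneg of_int_0_le_iff not_less)
  then have j: "j \<ge> 1" by simp
  have "inv_LCM {1, a} = 1 / L" unfolding inv_LCM_def L_def using False by simp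
  then show ?thesis using L j by (intro disjI2 exI[of _ j] exI[of _ i]) auto
qed

lemma S_prim_props:
  assumes m: "m \<ge> 2" and k: "k \<ge> 1" and al: "\<alpha> > 1"
  shows "finite (S_prim m k \<alpha>)" "\<forall>x\<in>S_prim m k \<alpha>. x > 0" "{1, \<alpha>} \<subseteq> S_prim m k \<alpha>"
proof -
  show "finite (S_prim m k \<alpha>)" unfolding S_prim_def by simp
  show "\<forall>x\<in>S_prim m k \<alpha>. x > 0" unfolding S_prim_def using m al by auto
  have "1 \<in> {1..k}" using k by simp
  then show "{1, \<alpha>} \<subseteq> S_prim m k \<alpha>" unfolding S_prim_def using m
    by (auto intro!: image_eqI[of _ _ 1])
qed

lemma S_sec_props:
  assumes m: "m \<ge> 2" and k: "k \<ge> 1" and al: "\<alpha> > 1"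
  shows "finite (S_sec m k \<alpha>)" "\<forall>x\<in>S_sec m k \<alpha>. x > 0" "{1, real m powr (1/real k) / \<alpha>} \<subseteq> S_sec m k \<alpha>"
proof -
  show "finite (S_sec m k \<alpha>)" unfolding S_sec_def by simp
  show "\<forall>x\<in>S_sec m k \<alpha>. x > 0" unfolding S_sec_def using m al by auto
  have "1 \<in> {1..k}" using k by simp
  then show "{1, real m powr (1/real k) / \<alpha>} \<subseteq> S_sec m k \<alpha>" unfolding S_sec_def using m
    by (auto intro!: image_eqI[of _ _ 1])
qed



lemma ln_upper_L1:
  fixes y :: real assumes "1 \<le> y" shows "ln y \<le> (y - 1/y)/2"
proof -
  have "(\<lambda>t. (t - 1/t)/2 - ln t) 1 \<le> (\<lambda>t. (t - 1/t)/2 - ln t) y"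
  proof (rule DERIV_nonneg_imp_nondecreasing[OF assms])
    fix x :: real assume x: "1 \<le> x" "x \<le> y"
    have "DERIV (\<lambda>t. (t - 1/t)/2 - ln t) x :> ((1 + 1/x^2)/2 - 1/x)"
      using x by (auto intro!: derivative_eq_intros simp: field_simps power2_eq_square)
    moreover have "(1 + 1/x^2)/2 - 1/x = (x-1)^2/(2*x^2)"
      using x by (simp add: field_simps power2_eq_square)
    ultimately show "\<exists>d. DERIV (\<lambda>t. (t - 1/t)/2 - ln t) x :> d \<and> d \<ge> 0" by auto
  qed
  then show ?thesis by simp
qed

lemma quad_int: fixes t x1 x2 :: real assumes "x1 \<le> t" "t \<le> x2"
  shows "t*t \<le> (x1+x2)*t - x1*x2"
proof -
  have "(t - x1)*(t - x2) \<le> 0" using assms by (intro mult_nonneg_nonpos) auto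
  then show ?thesis by (simp add: algebra_simps)
qed

lemma tang2: fixes x :: real assumes "x > 0" shows "ln x \<le> ln 2 + x/2 - 1"
proof -
  have "ln x = ln 2 + ln (x/2)" using assms by (simp add: ln_div)
  moreover have "ln (x/2) \<le> x/2 - 1" using assms by (intro ln_le_minus_one) simp
  ultimately show ?thesis by simp
qed

definition Wf :: "real \<Rightarrow> real \<Rightarrow> real \<Rightarrow> real \<Rightarrow> real" where
  "Wf a b ea eb = 2 - 2/(a*b) - (1-1/b)*ea - (1-1/a)*eb"

lemma cancel_pos: fixes P x y :: real assumes "P > 0" "P*x \<le> P*y" shows "x \<le> y"
  using assms by (simp add: mult_le_cancel_left_pos)

definition etype :: "real \<Rightarrow> real \<Rightarrow> bool" where
  "etype a e \<longleftrightarrow> 0 \<le> e \<and> (e \<le> 1/(4*a) \<or> (a = 2 \<and> e \<le> 1/2) \<or> (a = 3/2 \<and> e \<le> 1/3)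
      \<or> (a = 4/3 \<and> e \<le> 1/4) \<or> (a = 5/3 \<and> e \<le> 1/5))"

locale K = fixes K :: real assumes lo: "6929/10000 \<le> K" and hi: "K \<le> 867/1250" and K: "K = ln 2"
begin

lemma tang: "x > 0 \<Longrightarrow> ln x \<le> K + x/2 - 1" using tang2 K by simp

lemma big:
  fixes a b :: real assumes a: "a > 1" and b: "b > 1" and P: "a*b \<ge> 21/10"
  shows "5 * ln (a*b) \<le> 6*K*(a+b-2)"
proof -
  define t where "t = sqrt (a*b)"
  have tt: "t*t = a*b" unfolding t_def using a b by simp
  have tp: "t > 0" unfolding t_def using a b by simp
  have sab: "a + b \<ge> 2*t"
  proof -
    have "0 \<le> (sqrt a - sqrt b)^2" by simp
    also have "\<dots> = a + b - 2 * t" unfolding t_def using a b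
      by (simp add: power2_eq_square algebra_simps real_sqrt_mult)
    finally show ?thesis by simp
  qed
  have t1: "t \<ge> 1449/1000"
  proof (rule ccontr)
    assume "\<not> ?thesis"
    then have "t*t < 1449/1000 * (1449/1000)" using tp by (intro mult_strict_mono') auto
    then show False using tt P by simp
  qed
  have "ln (t*t) = ln t + ln t" using tp by (simp add: ln_mult)
  then have lnP: "ln (a*b) = 2 * ln t" using tt by simp
  show ?thesis
  proof (cases "t \<ge> 8/5")
    case True
    have L: "ln t \<le> (t - 1/t)/2" using True by (intro ln_upper_L1) simp
    have M: "5*(t - 1/t) \<le> 6*K*(2*t-2)"
    proof -
      have h1: "5*(t+1) \<le> 12*K*t"
      proof -
        have "K*t \<ge> (6929/10000)*t" using lo tp by (intro mult_right_mono) auto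
        moreover have "12*K*t = 12*(K*t)" by simp
        ultimately show ?thesis using True by ((simp only: ring_distribs mult.assoc)?; linarith)
      qed
      have "(t-1)*(5*(t+1)) \<le> (t-1)*(12*K*t)" using h1 True by (intro mult_left_mono) auto
      then have "5*(t*t - 1) \<le> t*(6*K*(2*t-2))" by (simp add: algebra_simps)
      moreover have "5*(t*t-1) = t*(5*(t - 1/t))" using tp by (simp add: field_simps)
      ultimately show ?thesis using mult_le_cancel_left_pos[OF tp] by simp
    qed
    have "5 * ln (a*b) = 10 * ln t" using lnP by simp
    also have "\<dots> \<le> 5*(t - 1/t)" using L by simp
    also have "\<dots> \<le> 6*K*(2*t-2)" by (rule M)
    also have "\<dots> \<le> 6*K*(a+b-2)" using sab lo by (intro mult_left_mono) auto
    finally show ?thesis .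
  next
    case False
    have l: "ln (a*b) \<le> K + t*t/2 - 1" using tang[of "a*b"] tt a b by simp
    have "K*(12*t - 17) \<ge> 6929/10000*(12*t-17)" using lo t1 by (intro mult_right_mono) auto
    moreover have "t*t \<le> (1449/1000 + 8/5)*t - 1449/1000*(8/5)" using t1 False by (intro quad_int) auto
    moreover have "5*(K + t*t/2 - 1) - 6*K*(2*t-2) = 5/2*(t*t) - 5 - K*(12*t-17)" by (simp add: algebra_simps)
    ultimately have M: "5 * (K + t*t/2 - 1) \<le> 6*K*(2*t-2)" using t1 by (simp only: algebra_simps; linarith)
    have "5 * ln (a*b) \<le> 5 * (K + t*t/2 - 1)" using l by simp
    also have "\<dots> \<le> 6*K*(2*t-2)" by (rule M)
    also have "\<dots> \<le> 6*K*(a+b-2)" using sab lo by (intro mult_left_mono) auto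
    finally show ?thesis .
  qed
qed

lemma Kpos: "K > 0" using lo by simp

lemma GG:
  fixes a b ea eb :: real
  assumes a: "a > 1" and b: "b > 1" and P: "a*b < 21/10"
    and ea: "0 \<le> ea" "ea \<le> 1/(4*a)" and eb: "0 \<le> eb" "eb \<le> 1/(4*b)"
  shows "5 * ln (a*b) \<le> 6*K*Wf a b ea eb"
proof -
  define P where "P = a*b"
  have Pp: "P > 1" unfolding P_def using a b by (metis less_1_mult)
  have Plt: "P < 21/10" unfolding P_def using P .
  have w1: "(1-1/b)*ea \<le> (1-1/b)*(1/(4*a))" using ea b by (intro mult_left_mono) auto
  have w2: "(1-1/a)*eb \<le> (1-1/a)*(1/(4*b))" using eb a by (intro mult_left_mono) auto
  have e: "2 - 2/P - (1-1/b)*(1/(4*a)) - (1-1/a)*(1/(4*b)) = 2 - 3/(2*P) - (a+b)/(4*P)"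
    unfolding P_def using a b by (simp add: field_simps)
  have ab: "a + b \<le> 1 + P" unfolding P_def using mult_nonneg_nonneg[of "a-1" "b-1"] a b by (simp add: algebra_simps)
  have "(a+b)/(4*P) \<le> (1+P)/(4*P)" using ab Pp by (simp add: divide_right_mono)
  moreover have "2 - 3/(2*P) - (1+P)/(4*P) = 7/4 - 7/(4*P)" using Pp by (simp add: field_simps)
  ultimately have Wge: "Wf a b ea eb \<ge> 7/4 - 7/(4*P)"
    using w1 w2 e unfolding Wf_def P_def[symmetric] by ((simp only: algebra_simps diff_divide_distrib add_divide_distrib)?; linarith)
  have main: "5 * ln P \<le> 6*K*(7/4 - 7/(4*P))"
  proof (cases "P \<le> 3/2")
    case True
    have L: "ln P \<le> (P - 1/P)/2" using Pp by (intro ln_upper_L1) simp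
    have h: "5*(P+1)/2 \<le> 21/2*K" using lo True by ((simp only: algebra_simps diff_divide_distrib add_divide_distrib)?; linarith)
    have "P*(5*((P - 1/P)/2)) = (P-1)*(5*(P+1)/2)" using Pp by (simp add: field_simps)
    also have "\<dots> \<le> (P-1)*(21/2*K)" using h Pp by (intro mult_left_mono) auto
    also have "\<dots> = P*(6*K*(7/4 - 7/(4*P)))" using Pp by (simp add: field_simps)
    finally have "P*(5*((P - 1/P)/2)) \<le> P*(6*K*(7/4 - 7/(4*P)))" .
    then have "5*((P - 1/P)/2) \<le> 6*K*(7/4 - 7/(4*P))" by (rule cancel_pos[rotated]) (use Pp in simp)
    then show ?thesis using L by ((simp only: algebra_simps diff_divide_distrib add_divide_distrib)?; linarith)
  next
    case False
    have L: "ln P \<le> K + P/2 - 1" using tang Pp by simp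
    have poly: "5/2*(P*P) - 5*P \<le> K*(11/2*P - 21/2)"
    proof (cases "P \<ge> 21/11")
      case True
      have "K*(11/2*P - 21/2) \<ge> 6929/10000*(11/2*P - 21/2)" using lo True by (intro mult_right_mono) auto
      moreover have "P*P \<le> (21/11 + 21/10)*P - 21/11*(21/10)" using True P unfolding P_def by (intro quad_int) auto
      ultimately show ?thesis using True Plt by ((simp only: algebra_simps diff_divide_distrib add_divide_distrib)?; linarith)
    next
      case F2: False
      have "K*(11/2*P - 21/2) \<ge> 867/1250*(11/2*P - 21/2)" using hi F2 by (intro mult_right_mono_neg) auto
      moreover have "P*P \<le> (3/2 + 21/11)*P - 3/2*(21/11)" using False F2 by (intro quad_int) auto
      ultimately show ?thesis using F2 False by ((simp only: algebra_simps diff_divide_distrib add_divide_distrib)?; linarith)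
    qed
    have "P*(5*(K + P/2 - 1)) \<le> P*(6*K*(7/4 - 7/(4*P)))"
    proof -
      have "P*(5*(K + P/2 - 1)) = 5*K*P + 5/2*(P*P) - 5*P" by (simp add: algebra_simps)
      moreover have "P*(6*K*(7/4 - 7/(4*P))) = 21/2*K*P - 21/2*K" using Pp by (simp add: field_simps)
      ultimately show ?thesis using poly by ((simp only: algebra_simps diff_divide_distrib add_divide_distrib)?; linarith)
    qed
    then have "5*(K + P/2 - 1) \<le> 6*K*(7/4 - 7/(4*P))" by (rule cancel_pos[rotated]) (use Pp in simp)
    then show ?thesis using L by ((simp only: algebra_simps diff_divide_distrib add_divide_distrib)?; linarith)
  qed
  have "6*K*(7/4 - 7/(4*P)) \<le> 6*K*Wf a b ea eb" using Wge Kpos by (intro mult_left_mono) auto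
  then show ?thesis using main unfolding P_def by ((simp only: algebra_simps diff_divide_distrib add_divide_distrib)?; linarith)
qed

lemma SG_W:
  fixes a b ea eb Ea :: real
  assumes a: "a > 1" and b: "b > 1" and ea: "0 \<le> ea" "ea \<le> Ea" and eb: "0 \<le> eb" "eb \<le> 1/(4*b)"
  shows "Wf a b ea eb \<ge> 2 - Ea - (2/a - Ea + (1-1/a)/4)/b"
proof -
  have w1: "(1-1/b)*ea \<le> (1-1/b)*Ea" using ea b by (intro mult_left_mono) auto
  have w2: "(1-1/a)*eb \<le> (1-1/a)*(1/(4*b))" using eb a by (intro mult_left_mono) auto
  have e: "2 - 2/(a*b) - (1-1/b)*Ea - (1-1/a)*(1/(4*b)) = 2 - Ea - (2/a - Ea + (1-1/a)/4)/b"
    using a b by (simp add: field_simps)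
  show ?thesis using w1 w2 e unfolding Wf_def by ((simp only: algebra_simps diff_divide_distrib add_divide_distrib)?; linarith)
qed

lemma SG_tan:
  fixes a b al be :: real
  assumes a: "a > 0" and b: "b > 0" and poly: "5*a/2*(b*b) - 5*b \<le> K*((6*al-5)*b - 6*be)"
  shows "5 * ln (a*b) \<le> 6*K*(al - be/b)"
proof -
  have L: "ln (a*b) \<le> K + a*b/2 - 1" using tang a b by simp
  have "b*(5*(K + a*b/2 - 1)) = 5*K*b + (5*a/2*(b*b) - 5*b)" by (simp add: algebra_simps)
  also have "\<dots> \<le> 5*K*b + K*((6*al-5)*b - 6*be)" using poly by simp
  also have "\<dots> = b*(6*K*(al - be/b))" using b by (simp add: field_simps)
  finally have "5*(K + a*b/2 - 1) \<le> 6*K*(al - be/b)" by (rule cancel_pos[rotated]) (use b in simp)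
  then show ?thesis using L by ((simp only: algebra_simps diff_divide_distrib add_divide_distrib)?; linarith)
qed

lemma SG2:
  fixes b :: real assumes b: "b > 1" "2*b < 21/10"
  shows "5 * ln (2*b) \<le> 6*K*(2+b-2)"
proof -
  have L: "ln (2*b) \<le> K + 2*b/2 - 1" using tang[of "2*b"] b by simp
  have "K*(6*b-5) \<ge> 6929/10000*(6*b-5)" using lo b by (intro mult_right_mono) auto
  then show ?thesis using L b by ((simp only: algebra_simps diff_divide_distrib add_divide_distrib)?; linarith)
qed

lemma SG32V:
  fixes b :: real assumes b: "b \<ge> 4/3"
  shows "5 * ln (3/2*b) \<le> 6*K*(3/2+b-2)"
proof -
  have L: "ln (3/2*b) \<le> K + 3/2*b/2 - 1" using tang[of "3/2*b"] b by simp
  have "K*(6*b-8) \<ge> 6929/10000*(6*b-8)" using lo b by (intro mult_right_mono) auto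
  then show ?thesis using L b by ((simp only: algebra_simps diff_divide_distrib add_divide_distrib)?; linarith)
qed

lemma SG32W:
  fixes b eb ea :: real assumes b: "b > 1" "b \<le> 4/3" and ea: "0 \<le> ea" "ea \<le> 1/3" and eb: "0 \<le> eb" "eb \<le> 1/(4*b)"
  shows "5 * ln (3/2*b) \<le> 6*K*Wf (3/2) b ea eb"
proof -
  have W: "Wf (3/2) b ea eb \<ge> 2 - 1/3 - (2/(3/2) - 1/3 + (1-1/(3/2))/4)/b"
    using SG_W[of "3/2" b ea "1/3" eb] b ea eb by simp
  have poly: "5*(3/2)/2*(b*b) - 5*b \<le> K*((6*(5/3)-5)*b - 6*(13/12))"
  proof (cases "b \<ge> 13/10")
    case True
    have "K*(5*b - 13/2) \<ge> 6929/10000*(5*b - 13/2)" using lo True by (intro mult_right_mono) auto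
    moreover have "b*b \<le> (13/10 + 4/3)*b - 13/10*(4/3)" using True b by (intro quad_int) auto
    ultimately show ?thesis using True b by ((simp only: algebra_simps diff_divide_distrib add_divide_distrib)?; linarith)
  next
    case False
    have "K*(5*b - 13/2) \<ge> 867/1250*(5*b - 13/2)" using hi False by (intro mult_right_mono_neg) auto
    moreover have "b*b \<le> (1 + 13/10)*b - 1*(13/10)" using False b by (intro quad_int) auto
    ultimately show ?thesis using False b by ((simp only: algebra_simps diff_divide_distrib add_divide_distrib)?; linarith)
  qed
  have "5 * ln (3/2*b) \<le> 6*K*(5/3 - (13/12)/b)" using SG_tan[OF _ _ poly] b by simp
  moreover have "6*K*(5/3 - (13/12)/b) \<le> 6*K*Wf (3/2) b ea eb" using W Kpos by (intro mult_left_mono) auto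
  ultimately show ?thesis by linarith
qed

lemma SG43W:
  fixes b eb ea :: real assumes b: "b > 1" "b < 63/40" and ea: "0 \<le> ea" "ea \<le> 1/4" and eb: "0 \<le> eb" "eb \<le> 1/(4*b)"
  shows "5 * ln (4/3*b) \<le> 6*K*Wf (4/3) b ea eb"
proof -
  have W: "Wf (4/3) b ea eb \<ge> 2 - 1/4 - (2/(4/3) - 1/4 + (1-1/(4/3))/4)/b"
    using SG_W[of "4/3" b ea "1/4" eb] b ea eb by simp
  have poly: "5*(4/3)/2*(b*b) - 5*b \<le> K*((6*(7/4)-5)*b - 6*(21/16))"
  proof (cases "b \<ge> 63/44")
    case True
    have "K*(11/2*b - 63/8) \<ge> 6929/10000*(11/2*b - 63/8)" using lo True by (intro mult_right_mono) auto
    moreover have "b*b \<le> (63/44 + 63/40)*b - 63/44*(63/40)" using True b by (intro quad_int) auto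
    ultimately show ?thesis using True b by ((simp only: algebra_simps diff_divide_distrib add_divide_distrib)?; linarith)
  next
    case False
    have "K*(11/2*b - 63/8) \<ge> 867/1250*(11/2*b - 63/8)" using hi False by (intro mult_right_mono_neg) auto
    moreover have "b*b \<le> (1 + 63/44)*b - 1*(63/44)" using False b by (intro quad_int) auto
    ultimately show ?thesis using False b by ((simp only: algebra_simps diff_divide_distrib add_divide_distrib)?; linarith)
  qed
  have "5 * ln (4/3*b) \<le> 6*K*(7/4 - (21/16)/b)" using SG_tan[OF _ _ poly] b by simp
  moreover have "6*K*(7/4 - (21/16)/b) \<le> 6*K*Wf (4/3) b ea eb" using W Kpos by (intro mult_left_mono) auto
  ultimately show ?thesis by linarith
qed

lemma SG53W:
  fixes b eb ea :: real assumes b: "b > 1" "b < 63/50" and ea: "0 \<le> ea" "ea \<le> 1/5" and eb: "0 \<le> eb" "eb \<le> 1/(4*b)"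
  shows "5 * ln (5/3*b) \<le> 6*K*Wf (5/3) b ea eb"
proof -
  have W: "Wf (5/3) b ea eb \<ge> 2 - 1/5 - (2/(5/3) - 1/5 + (1-1/(5/3))/4)/b"
    using SG_W[of "5/3" b ea "1/5" eb] b ea eb by simp
  have poly: "5*(5/3)/2*(b*b) - 5*b \<le> K*((6*(9/5)-5)*b - 6*(11/10))"
  proof (cases "b \<ge> 33/29")
    case True
    have "K*(29/5*b - 33/5) \<ge> 6929/10000*(29/5*b - 33/5)" using lo True by (intro mult_right_mono) auto
    moreover have "b*b \<le> (33/29 + 63/50)*b - 33/29*(63/50)" using True b by (intro quad_int) auto
    ultimately show ?thesis using True b by ((simp only: algebra_simps diff_divide_distrib add_divide_distrib)?; linarith)
  next
    case False
    have "K*(29/5*b - 33/5) \<ge> 867/1250*(29/5*b - 33/5)" using hi False by (intro mult_right_mono_neg) auto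
    moreover have "b*b \<le> (1 + 33/29)*b - 1*(33/29)" using False b by (intro quad_int) auto
    ultimately show ?thesis using False b by ((simp only: algebra_simps diff_divide_distrib add_divide_distrib)?; linarith)
  qed
  have "5 * ln (5/3*b) \<le> 6*K*(9/5 - (11/10)/b)" using SG_tan[OF _ _ poly] b by simp
  moreover have "6*K*(9/5 - (11/10)/b) \<le> 6*K*Wf (5/3) b ea eb" using W Kpos by (intro mult_left_mono) auto
  ultimately show ?thesis by linarith
qed

lemma SS44:
  fixes ea eb :: real assumes ea: "0 \<le> ea" "ea \<le> 1/4" and eb: "0 \<le> eb" "eb \<le> 1/4"
  shows "5 * ln (4/3*(4/3)) \<le> 6*K*Wf (4/3) (4/3) ea eb"
proof -
  have "Wf (4/3) (4/3) ea eb \<ge> 3/4" using ea eb unfolding Wf_def by simp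
  moreover have "ln (4/3*(4/3::real)) \<le> K + 4/3*(4/3)/2 - 1" using tang[of "4/3*(4/3)"] by simp
  moreover have "6*K*(3/4) \<le> 6*K*Wf (4/3) (4/3) ea eb" using calculation(1) Kpos by (intro mult_left_mono) auto
  ultimately show ?thesis using hi by linarith
qed

lemma SS3243V: "5 * ln (4/3*(3/2)) \<le> 6*K*(4/3 + 3/2 - 2)"
  using K by simp


lemma maxW: "x \<le> 6*K*W \<Longrightarrow> x \<le> 6*K*max W V"
proof -
  assume "x \<le> 6*K*W"
  moreover have "6*K*W \<le> 6*K*max W V" using Kpos by (intro mult_left_mono) auto
  ultimately show ?thesis by linarith
qed

lemma maxV: "x \<le> 6*K*V \<Longrightarrow> x \<le> 6*K*max W V"
proof -
  assume "x \<le> 6*K*V"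
  moreover have "6*K*V \<le> 6*K*max W V" using Kpos by (intro mult_left_mono) auto
  ultimately show ?thesis by linarith
qed

lemma half:
  fixes a b ea eb :: real
  assumes a: "(a = 2 \<and> ea \<le> 1/2) \<or> (a = 3/2 \<and> ea \<le> 1/3) \<or> (a = 4/3 \<and> ea \<le> 1/4) \<or> (a = 5/3 \<and> ea \<le> 1/5)"
    and ea: "0 \<le> ea" and tb: "etype b eb" and b: "b > 1" and P: "a*b < 21/10"
  shows "5 * ln (a*b) \<le> 6*K*max (Wf a b ea eb) (a+b-2)"
proof -
  have eb0: "0 \<le> eb" using tb unfolding etype_def by auto
  consider "a = 2" | "a = 3/2" "ea \<le> 1/3" | "a = 4/3" "ea \<le> 1/4" | "a = 5/3" "ea \<le> 1/5" using a by auto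
  then show ?thesis
  proof cases
    case 1
    have bl: "2*b < 21/10" using P 1 by simp
    show ?thesis unfolding 1 by (rule maxV[OF SG2]) (use b bl in auto)
  next
    case 2
    show ?thesis
    proof (cases "b \<ge> 4/3")
      case True
      show ?thesis unfolding 2(1) by (rule maxV[OF SG32V]) (use True in auto)
    next
      case False
      then have "eb \<le> 1/(4*b)" using tb unfolding etype_def by auto
      then show ?thesis unfolding 2(1) by (intro maxW SG32W) (use 2 False b ea eb0 in auto)
    qed
  next
    case 3
    have bl: "b < 63/40" using P 3 by simp
    consider "eb \<le> 1/(4*b)" | "b = 4/3" "eb \<le> 1/4" | "b = 3/2" | "b = 2" | "b = 5/3"
      using tb unfolding etype_def by auto
    then show ?thesis
    proof cases
      case 1
      then show ?thesis unfolding 3(1) by (intro maxW SG43W) (use 3 b bl ea eb0 in auto)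
    next
      case 2
      then show ?thesis unfolding 3(1) 2(1) by (intro maxW SS44) (use 3 ea eb0 in auto)
    next
      case c3: 3
      show ?thesis unfolding 3(1) c3 by (rule maxV[OF SS3243V])
    next
      case 4
      then show ?thesis using 3 P by simp
    next
      case 5
      have "a*b = 20/9" unfolding 3(1) 5 by simp
      then show ?thesis using P by simp
    qed
  next
    case 4
    have bl: "b < 63/50" using P 4 by simp
    then have "eb \<le> 1/(4*b)" using tb unfolding etype_def by auto
    then show ?thesis unfolding 4(1) by (intro maxW SG53W) (use 4 b bl ea eb0 in auto)
  qed
qed

lemma Wf_sym: "Wf a b ea eb = Wf b a eb ea"
  unfolding Wf_def by (simp add: algebra_simps)

lemma core:
  fixes a b ea eb :: real
  assumes a: "a > 1" and b: "b > 1" and t: "a*b < 21/10 \<Longrightarrow> etype a ea \<and> etype b eb"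
  shows "5 * ln (a*b) \<le> 6*K*max (Wf a b ea eb) (a+b-2)"
proof (cases "a*b \<ge> 21/10")
  case True
  show ?thesis by (rule maxV[OF big[OF a b True]])
next
  case False
  then have Pl: "a*b < 21/10" by simp
  then have ta: "etype a ea" and tb: "etype b eb" using t by auto
  have ea0: "0 \<le> ea" and eb0: "0 \<le> eb" using ta tb unfolding etype_def by auto
  show ?thesis
  proof (cases "ea \<le> 1/(4*a)")
    case ga: True
    show ?thesis
    proof (cases "eb \<le> 1/(4*b)")
      case True
      show ?thesis by (rule maxW[OF GG[OF a b Pl ea0 ga eb0 True]])
    next
      case gb: False
      have sb: "(b = 2 \<and> eb \<le> 1/2) \<or> (b = 3/2 \<and> eb \<le> 1/3) \<or> (b = 4/3 \<and> eb \<le> 1/4) \<or> (b = 5/3 \<and> eb \<le> 1/5)"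
        using tb gb unfolding etype_def by auto
      have Pl': "b*a < 21/10" using Pl by (simp add: mult.commute)
      have "5 * ln (b*a) \<le> 6*K*max (Wf b a eb ea) (b+a-2)" by (rule half[OF sb eb0 ta a Pl'])
      then show ?thesis by (simp add: Wf_sym mult.commute add.commute)
    qed
  next
    case ga: False
    have sa: "(a = 2 \<and> ea \<le> 1/2) \<or> (a = 3/2 \<and> ea \<le> 1/3) \<or> (a = 4/3 \<and> ea \<le> 1/4) \<or> (a = 5/3 \<and> ea \<le> 1/5)"
      using ta ga unfolding etype_def by auto
    show ?thesis by (rule half[OF sa ea0 tb b Pl])
  qed
qed

end


lemma ln_lower_L2:
  fixes y :: real assumes "1 \<le> y" shows "2*(y-1)/(y+1) \<le> ln y"
proof -
  have "(\<lambda>t. ln t - 2*(t-1)/(t+1)) 1 \<le> (\<lambda>t. ln t - 2*(t-1)/(t+1)) y"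
  proof (rule DERIV_nonneg_imp_nondecreasing[OF assms])
    fix x :: real assume x: "1 \<le> x" "x \<le> y"
    have xp: "x + 1 \<noteq> 0" "x \<noteq> 0" using x by auto
    have "DERIV (\<lambda>t. ln t - 2*(t-1)/(t+1)) x :> (1/x - (2*(x+1) - 2*(x-1))/(x+1)^2)"
      using x by (auto intro!: derivative_eq_intros simp: power2_eq_square)
    moreover have "(1/x - (2*(x+1) - 2*(x-1))/(x+1)^2) = 1/x - 4/(x+1)^2" by simp
    ultimately have "DERIV (\<lambda>t. ln t - 2*(t-1)/(t+1)) x :> (1/x - 4/(x+1)^2)" by simp
    moreover have "1/x - 4/(x+1)^2 = (x-1)^2/(x*(x+1)^2)"
      using xp by (simp add: divide_simps) (simp add: algebra_simps power2_eq_square)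
    ultimately show "\<exists>d. DERIV (\<lambda>t. ln t - 2*(t-1)/(t+1)) x :> d \<and> d \<ge> 0" using x by auto
  qed
  then show ?thesis by simp
qed

lemma ln2_bounds: "6929/10000 \<le> ln (2::real)" "ln (2::real) \<le> 6936/10000"
proof -
  have e: "ln (2::real) = 7 * ln (16/15) + 5 * ln (25/24) + 3 * ln (81/80)"
  proof -
    have "(2::real) = (16/15)^7 * (25/24)^5 * (81/80)^3" by (simp add: power_divide)
    then have "ln (2::real) = ln ((16/15)^7 * (25/24)^5 * (81/80)^3)" by simp
    also have "\<dots> = 7 * ln (16/15) + 5 * ln (25/24) + 3 * ln (81/80)"
      by (simp add: ln_mult ln_realpow)
    finally show ?thesis .
  qed
  have a1: "2*((16/15::real)-1)/((16/15)+1) \<le> ln (16/15::real)" by (rule ln_lower_L2) simp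
  have a2: "2*((25/24::real)-1)/((25/24)+1) \<le> ln (25/24::real)" by (rule ln_lower_L2) simp
  have a3: "2*((81/80::real)-1)/((81/80)+1) \<le> ln (81/80::real)" by (rule ln_lower_L2) simp
  have b1: "ln (16/15::real) \<le> ((16/15) - 1/(16/15))/2" by (rule ln_upper_L1) simp
  have b2: "ln (25/24::real) \<le> ((25/24) - 1/(25/24))/2" by (rule ln_upper_L1) simp
  have b3: "ln (81/80::real) \<le> ((81/80) - 1/(81/80))/2" by (rule ln_upper_L1) simp
  show "6929/10000 \<le> ln (2::real)" using e a1 a2 a3 by simp
  show "ln (2::real) \<le> 6936/10000" using e b1 b2 b3 by simp
qed

lemma K_ln2: "K (ln 2)"
  using ln2_bounds by unfold_locales simp_all

lemma eps_etype:
  assumes a1: "1 < a" and a2: "a < 21/10"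
  shows "etype a (inv_LCM {1, a})"
proof -
  consider "inv_LCM {1, a} = 0"
    | j i :: int where "j \<ge> 1" "of_int j * a = of_int i" "inv_LCM {1, a} = 1 / (of_int j * a)"
    using eps_cases[OF a1] by blast
  then show ?thesis
  proof cases
    case 1
    then show ?thesis unfolding etype_def using a1 by simp
  next
    case 2
    note j = 2
    have jp: "(of_int j::real) \<ge> 1" using j(1) by simp
    have ja: "of_int j * a > 0" using jp a1 by simp
    have e0: "0 \<le> inv_LCM {1, a}" using j(3) ja by simp
    show ?thesis
    proof (cases "j \<ge> 4")
      case True
      then have "(of_int j::real) \<ge> 4" by simp
      then have "4 * a \<le> of_int j * a" using a1 by (intro mult_right_mono) auto
      then have "1/(of_int j * a) \<le> 1/(4*a)" using a1 by (intro divide_left_mono) auto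
      then show ?thesis unfolding etype_def using e0 j(3) by simp
    next
      case False
      have r1: "of_int j < (of_int i::real)"
      proof -
        have "of_int j * 1 < of_int j * a" using jp a1 by (intro mult_strict_left_mono) auto
        then show ?thesis using j(2) by simp
      qed
      have r2: "10 * of_int i < (21 * of_int j::real)"
      proof -
        have "of_int j * a < of_int j * (21/10)" using jp a2 by (intro mult_strict_left_mono) auto
        then show ?thesis using j(2) by simp
      qed
      have i1: "j < i" using r1 by simp
      have i2: "10 * i < 21 * j"
      proof -
        have "real_of_int (10 * i) < real_of_int (21 * j)" using r2 by simp
        then show ?thesis by (simp only: of_int_less_iff)
      qed
      have cs: "(j=1 \<and> i=2) \<or> (j=2 \<and> i=3) \<or> (j=2 \<and> i=4) \<or> (j=3 \<and> i=4) \<or> (j=3 \<and> i=5) \<or> (j=3 \<and> i=6)"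
      proof -
        have "j = 1 \<or> j = 2 \<or> j = 3" using False j(1) by linarith
        moreover have "j = 1 \<Longrightarrow> i = 2" using i1 i2 by linarith
        moreover have "j = 2 \<Longrightarrow> i = 3 \<or> i = 4" using i1 i2 by linarith
        moreover have "j = 3 \<Longrightarrow> i = 4 \<or> i = 5 \<or> i = 6" using i1 i2 by linarith
        ultimately show ?thesis by blast
      qed
      have e: "inv_LCM {1, a} = 1 / of_int i" using j(2) j(3) by simp
      have aeq: "a = of_int i / of_int j" using j(2) jp by (simp add: field_simps)
      from cs show ?thesis
      proof (elim disjE conjE)
        assume ji: "j = 1" "i = 2"
        have av: "a = 2" using aeq ji by simp
        have ev: "inv_LCM {1, a} = 1/2" using e ji by simp
        show ?thesis unfolding etype_def ev unfolding av by simp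
      next
        assume ji: "j = 2" "i = 3"
        have av: "a = 3/2" using aeq ji by simp
        have ev: "inv_LCM {1, a} = 1/3" using e ji by simp
        show ?thesis unfolding etype_def ev unfolding av by simp
      next
        assume ji: "j = 2" "i = 4"
        have av: "a = 2" using aeq ji by simp
        have ev: "inv_LCM {1, a} = 1/4" using e ji by simp
        show ?thesis unfolding etype_def ev unfolding av by simp
      next
        assume ji: "j = 3" "i = 4"
        have av: "a = 4/3" using aeq ji by simp
        have ev: "inv_LCM {1, a} = 1/4" using e ji by simp
        show ?thesis unfolding etype_def ev unfolding av by simp
      next
        assume ji: "j = 3" "i = 5"
        have av: "a = 5/3" using aeq ji by simp
        have ev: "inv_LCM {1, a} = 1/5" using e ji by simp
        show ?thesis unfolding etype_def ev unfolding av by simp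
      next
        assume ji: "j = 3" "i = 6"
        have av: "a = 2" using aeq ji by simp
        have ev: "inv_LCM {1, a} = 1/6" using e ji by simp
        show ?thesis unfolding etype_def ev unfolding av by simp
      qed
    qed
  qed
qed

lemma inv_LCM_32: "inv_LCM {1, 3/2} = 1/3"
proof -
  have in3: "3 \<in> common_multiples {1, 3/2::real}" unfolding common_multiples_def
    by (auto intro: exI[of _ 3] exI[of _ 2])
  have "(LEAST L. L \<in> common_multiples {1, 3/2::real}) = 3"
  proof (rule Least_equality)
    show "3 \<in> common_multiples {1, 3/2::real}" by (rule in3)
    fix y assume "y \<in> common_multiples {1, 3/2::real}"
    then obtain i j :: int where y: "y > 0" "y = of_int i" "y = of_int j * (3/2)"
      unfolding common_multiples_def by force
    have "real_of_int (2*i) = real_of_int (3*j)" using y by simp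
    then have "2*i = 3*j" by (simp only: of_int_eq_iff)
    moreover have "i \<ge> 1" using y by simp
    ultimately have "i \<ge> 3" by presburger
    then show "3 \<le> y" using y by simp
  qed
  then show ?thesis unfolding inv_LCM_def using in3 by auto
qed

lemma inv_LCM_43: "inv_LCM {1, 4/3} = 1/4"
proof -
  have in4: "4 \<in> common_multiples {1, 4/3::real}" unfolding common_multiples_def
    by (auto intro: exI[of _ 4] exI[of _ 3])
  have "(LEAST L. L \<in> common_multiples {1, 4/3::real}) = 4"
  proof (rule Least_equality)
    show "4 \<in> common_multiples {1, 4/3::real}" by (rule in4)
    fix y assume "y \<in> common_multiples {1, 4/3::real}"
    then obtain i j :: int where y: "y > 0" "y = of_int i" "y = of_int j * (4/3)"
      unfolding common_multiples_def by force
    have "real_of_int (3*i) = real_of_int (4*j)" using y by simp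
    then have "3*i = 4*j" by (simp only: of_int_eq_iff)
    moreover have "i \<ge> 1" using y by simp
    ultimately have "i \<ge> 4" by presburger
    then show "4 \<le> y" using y by simp
  qed
  then show ?thesis unfolding inv_LCM_def using in4 by auto
qed

lemma pw21: "real (2::nat) powr (1 / real (1::nat)) = 2" by simp

lemma vj_calc: "Sigma_prim 2 1 (3/2) = 4/3 \<Longrightarrow> Sigma_sec 2 1 (3/2) = 3/2 \<Longrightarrow> V_J 2 1 (3/2) = 5 / (6 * ln 2)"
proof -
  assume p: "Sigma_prim 2 1 (3/2) = 4/3" and s: "Sigma_sec 2 1 (3/2) = 3/2"
  have "V_J 2 1 (3/2) = real (1::nat) / ln (real (2::nat)) * ((1 - (3/2) / 2) * (4/3) + (1 - 1 / (3/2)) * (3/2))"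
    unfolding V_J_def p s pw21 by (rule refl)
  also have "\<dots> = 5 / (6 * ln 2)" by simp
  finally show ?thesis .
qed

lemma vh_calc: "V_H 2 1 (3/2) = 5 / (6 * ln 2)" unfolding V_H_def pw21 by (simp add: field_simps)

lemma exact_part: "max (V_J 2 1 (3/2)) (V_H 2 1 (3/2)) = 5 / (6 * ln 2)"
proof -
  have sp: "S_prim 2 1 (3/2) = {1, 3/2}" unfolding S_prim_def by (simp add: insert_commute)
  have ss: "S_sec 2 1 (3/2) = {1, 4/3}" unfolding S_sec_def by (simp add: insert_commute)
  have p: "Sigma_prim 2 1 (3/2) = 4/3" unfolding Sigma_prim_def sp
    using incl_excl_pair[of "3/2"] inv_LCM_32 by simp
  have s: "Sigma_sec 2 1 (3/2) = 3/2" unfolding Sigma_sec_def ss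
    using incl_excl_pair[of "4/3"] inv_LCM_43 by simp
  show ?thesis using vj_calc[OF p s] vh_calc by simp
qed



theorem lemma4p3:
  shows "(\<forall>(m::nat) (k::nat) (\<alpha>::real).
            m \<ge> 2 \<longrightarrow> k \<ge> 1 \<longrightarrow> 1 < \<alpha> \<longrightarrow> \<alpha> < real m powr (1 / real k) \<longrightarrow>
            max (V_J m k \<alpha>) (V_H m k \<alpha>) \<ge> 5 / (6 * ln 2))
         \<and> max (V_J 2 1 (3/2)) (V_H 2 1 (3/2)) = 5 / (6 * ln 2)"
proof (intro conjI allI impI)
  show "max (V_J 2 1 (3/2)) (V_H 2 1 (3/2)) = 5 / (6 * ln 2)" by (rule exact_part)
next
  fix m k :: nat and \<alpha> :: real
  assume m: "m \<ge> 2" and k: "k \<ge> 1" and a1: "1 < \<alpha>" and aM: "\<alpha> < real m powr (1 / real k)"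
  define M where "M = real m powr (1 / real k)"
  define b where "b = M / \<alpha>"
  have Mp: "M > 0" unfolding M_def using m by simp
  have aM': "\<alpha> < M" using aM unfolding M_def .
  have b1: "b > 1" unfolding b_def using aM' a1 by simp
  have lnM: "ln M = ln (real m) / real k" unfolding M_def using m by (simp add: ln_powr)
  have lnm: "ln (real m) > 0" using m by simp
  have lnMp: "ln M > 0" using lnM lnm k by simp
  have kl: "real k / ln (real m) = 1 / ln M" using lnM k lnm lnMp by (simp add: field_simps)
  have abM: "\<alpha> * b = M" unfolding b_def using a1 by simp
  define ea where "ea = inv_LCM {1, \<alpha>}"
  define eb where "eb = inv_LCM {1, b}"
  have sp: "Sigma_prim m k \<alpha> \<ge> 1 + 1/\<alpha> - ea"
  proof -
    have "incl_excl_sum {1, \<alpha>} \<le> incl_excl_sum (S_prim m k \<alpha>)"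
      by (rule incl_excl_mono[OF S_prim_props(1,2,3)[OF m k a1]])
    moreover have "incl_excl_sum {1, \<alpha>} = 1 + 1/\<alpha> - ea" unfolding ea_def
      using incl_excl_pair[of \<alpha>] a1 by simp
    ultimately show ?thesis unfolding Sigma_prim_def by simp
  qed
  have ss: "Sigma_sec m k \<alpha> \<ge> 1 + 1/b - eb"
  proof -
    have sub: "{1, b} \<subseteq> S_sec m k \<alpha>" using S_sec_props(3)[OF m k a1] unfolding b_def M_def .
    have "incl_excl_sum {1, b} \<le> incl_excl_sum (S_sec m k \<alpha>)"
      by (rule incl_excl_mono[OF S_sec_props(1,2)[OF m k a1] sub])
    moreover have "incl_excl_sum {1, b} = 1 + 1/b - eb" unfolding eb_def
      using incl_excl_pair[of b] b1 by simp
    ultimately show ?thesis unfolding Sigma_sec_def by simp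
  qed
  have c1: "1 - \<alpha>/M \<ge> 0" using aM' Mp by simp
  have c2: "1 - 1/\<alpha> \<ge> 0" using a1 by simp
  have VJ: "V_J m k \<alpha> = (1 / ln M) * ((1 - \<alpha>/M) * Sigma_prim m k \<alpha> + (1 - 1/\<alpha>) * Sigma_sec m k \<alpha>)"
    unfolding V_J_def M_def[symmetric] kl ..
  have inner: "(1 - \<alpha>/M) * Sigma_prim m k \<alpha> + (1 - 1/\<alpha>) * Sigma_sec m k \<alpha> \<ge> Wf \<alpha> b ea eb"
  proof -
    have "(1 - \<alpha>/M) * (1 + 1/\<alpha> - ea) \<le> (1 - \<alpha>/M) * Sigma_prim m k \<alpha>" using sp c1 by (rule mult_left_mono)
    moreover have "(1 - 1/\<alpha>) * (1 + 1/b - eb) \<le> (1 - 1/\<alpha>) * Sigma_sec m k \<alpha>" using ss c2 by (rule mult_left_mono)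
    moreover have "(1 - \<alpha>/M) * (1 + 1/\<alpha> - ea) + (1 - 1/\<alpha>) * (1 + 1/b - eb) = Wf \<alpha> b ea eb"
      unfolding Wf_def b_def using a1 Mp by (simp add: field_simps)
    ultimately show ?thesis by linarith
  qed
  have VJge: "V_J m k \<alpha> \<ge> Wf \<alpha> b ea eb / ln M"
    unfolding VJ using inner lnMp by (simp add: divide_right_mono)
  have VH: "V_H m k \<alpha> = (\<alpha> + b - 2) / ln M"
    unfolding V_H_def M_def[symmetric] kl b_def by simp
  have et: "\<alpha> * b < 21/10 \<Longrightarrow> etype \<alpha> ea \<and> etype b eb"
  proof -
    assume P: "\<alpha> * b < 21/10"
    have "\<alpha> * 1 < \<alpha> * b" using a1 b1 by (intro mult_strict_left_mono) auto
    then have "\<alpha> < 21/10" using P by simp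
    moreover have "1 * b < \<alpha> * b" using a1 b1 by (intro mult_strict_right_mono) auto
    then have "b < 21/10" using P by simp
    ultimately show ?thesis unfolding ea_def eb_def using eps_etype a1 b1 by simp
  qed
  have core: "5 * ln (\<alpha> * b) \<le> 6 * ln 2 * max (Wf \<alpha> b ea eb) (\<alpha> + b - 2)"
    using K.core[OF K_ln2 a1 b1 et] by simp
  have "5 / (6 * ln 2) \<le> max (Wf \<alpha> b ea eb) (\<alpha> + b - 2) / ln M"
    using core abM lnMp ln2_bounds by (simp add: divide_simps mult.commute)
  also have "\<dots> = max (Wf \<alpha> b ea eb / ln M) ((\<alpha> + b - 2) / ln M)"
    using lnMp by (simp add: max_divide_distrib_right)
  also have "\<dots> \<le> max (V_J m k \<alpha>) (V_H m k \<alpha>)"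
    unfolding VH using VJge by (rule max.mono) simp
  finally show "max (V_J m k \<alpha>) (V_H m k \<alpha>) \<ge> 5 / (6 * ln 2)" .
qed

end
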